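(* Let $\Bbbk$ be a field, $V$ a finite-dimensional $\Bbbk$-vector space and $R$ a Hecke symmetry on $V$ with parameter $q$. Assume $\dim\Upsilon^{(n)}=1$ and $\Upsilon^{(n+1)}=0$ for some $n>0$, and fix $0\neq t\in\Upsilon^{(n)}$. Then there are linear operators $\theta,\bar\theta\in GL(V)$ such that $$R_n^{(n+1)}R_{n-1}^{(n+1)}\cdots R_1^{(n+1)}(vt)=t\,\theta(v),\qquad R_1^{(n+1)}R_2^{(n+1)}\cdots R_n^{(n+1)}(tv)=\bar\theta(v)\,t$$ for all $v\in V$. Moreover, $\bar\theta=q^{n+1}\theta^{-1}$.
   Context: A Hecke symmetry on $V$ with parameter $0\neq q\in\Bbbk$ is a linear map $R:V\otimes V\to V\otimes V$ satisfying $(R\otimes\mathrm{Id}_V)(\mathrm{Id}_V\otimes R)(R\otimes\mathrm{Id}_V)=(\mathrm{Id}_V\otimes R)(R\otimes\mathrm{Id}_V)(\mathrm{Id}_V\otimes R)$ and $(R-q\,\mathrm{Id})(R+\mathrm{Id})=0$ ($q=-1$ allowed). In the tensor algebra products are written $ab=a\otimes b$. For $p\ge2$, $1\le i\le p-1$, $R_i^{(p)}=\mathrm{Id}_V^{\otimes(i-1)}\otimes R\otimes\mathrm{Id}_V^{\otimes(p-i-1)}$ on $V^{\otimes p}$. $\Upsilon^{(0)}=\Bbbk$, $\Upsilon^{(1)}=V$, $\Upsilon^{(p)}=\bigcap_{i=1}^{p-1}(R_i^{(p)}-q\,\mathrm{Id})V^{\otimes p}$ for $p\ge2$. *)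

theory Defs
  imports Complex_Main "HOL-Library.Function_Algebras"
begin

text \<open>Coordinates: V has basis indexed by a finite type 'i; an element of the
tensor power V^(p) is a coefficient function on words (lists) of length p.
The value at w is the coefficient of e_(w!0) (x) ... (x) e_(w!(p-1)).\<close>

definition tpow :: "nat \<Rightarrow> ('i list \<Rightarrow> 'a::field) set" where
  "tpow p = {f. \<forall>w. length w \<noteq> p \<longrightarrow> f w = 0}"

definition sc :: "'a::field \<Rightarrow> ('i list \<Rightarrow> 'a) \<Rightarrow> ('i list \<Rightarrow> 'a)" where
  "sc c f = (\<lambda>w. c * f w)"

global_interpretation tens: vector_space "sc :: 'a::field \<Rightarrow> ('i list \<Rightarrow> 'a) \<Rightarrow> _"
  by unfold_locales (auto simp: sc_def fun_eq_iff algebra_simps)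

text \<open>Product in the tensor algebra: f of degree p times g.\<close>
definition tmul :: "nat \<Rightarrow> ('i list \<Rightarrow> 'a::field) \<Rightarrow> ('i list \<Rightarrow> 'a) \<Rightarrow> ('i list \<Rightarrow> 'a)" where
  "tmul p f g = (\<lambda>w. f (take p w) * g (drop p w))"

text \<open>R given by its matrix: R(e_c (x) e_d) = sum_{a,b} Rm a b c d e_a (x) e_b.
Ri p i is Id^(i-1) (x) R (x) Id^(p-i-1) on V^(p) (positions i, i+1, 1-based).\<close>
definition Ri :: "('i::finite \<Rightarrow> 'i \<Rightarrow> 'i \<Rightarrow> 'i \<Rightarrow> 'a::field) \<Rightarrow> nat \<Rightarrow> nat
    \<Rightarrow> ('i list \<Rightarrow> 'a) \<Rightarrow> ('i list \<Rightarrow> 'a)" where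
  "Ri Rm p i f = (\<lambda>w. if length w = p then
      (\<Sum>c\<in>UNIV. \<Sum>d\<in>UNIV. Rm (w!(i-1)) (w!i) c d * f (w[i-1 := c, i := d])) else 0)"

definition is_hecke :: "('i::finite \<Rightarrow> 'i \<Rightarrow> 'i \<Rightarrow> 'i \<Rightarrow> 'a::field) \<Rightarrow> 'a \<Rightarrow> bool" where
  "is_hecke Rm q \<longleftrightarrow> q \<noteq> 0 \<and>
     (\<forall>f\<in>tpow 3. Ri Rm 3 1 (Ri Rm 3 2 (Ri Rm 3 1 f)) = Ri Rm 3 2 (Ri Rm 3 1 (Ri Rm 3 2 f))) \<and>
     (\<forall>f\<in>tpow 2. Ri Rm 2 1 (Ri Rm 2 1 f + f) - sc q (Ri Rm 2 1 f + f) = 0)"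

text \<open>Upsilon^(p) = intersection over 1 \<le> i \<le> p-1 of (R_i - q Id) V^(p);
for p \<le> 1 the intersection is empty and this is V^(p) itself.\<close>
definition Ups :: "('i::finite \<Rightarrow> 'i \<Rightarrow> 'i \<Rightarrow> 'i \<Rightarrow> 'a::field) \<Rightarrow> 'a \<Rightarrow> nat \<Rightarrow> ('i list \<Rightarrow> 'a) set" where
  "Ups Rm q p = {f\<in>tpow p. \<forall>i. 1 \<le> i \<and> i \<le> p - 1 \<longrightarrow>
      (\<exists>g\<in>tpow p. f = Ri Rm p i g - sc q g)}"

text \<open>Rdown p k = R_k ... R_2 R_1 (R_1 applied first); Rup p k = R_1 R_2 ... R_k.\<close>
fun Rdown :: "('i::finite \<Rightarrow> 'i \<Rightarrow> 'i \<Rightarrow> 'i \<Rightarrow> 'a::field) \<Rightarrow> nat \<Rightarrow> nat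
    \<Rightarrow> ('i list \<Rightarrow> 'a) \<Rightarrow> ('i list \<Rightarrow> 'a)" where
  "Rdown Rm p 0 f = f"
| "Rdown Rm p (Suc k) f = Ri Rm p (Suc k) (Rdown Rm p k f)"

fun Rup :: "('i::finite \<Rightarrow> 'i \<Rightarrow> 'i \<Rightarrow> 'i \<Rightarrow> 'a::field) \<Rightarrow> nat \<Rightarrow> nat
    \<Rightarrow> ('i list \<Rightarrow> 'a) \<Rightarrow> ('i list \<Rightarrow> 'a)" where
  "Rup Rm p 0 f = f"
| "Rup Rm p (Suc k) f = Rup Rm p k (Ri Rm p (Suc k) f)"

definition in_GL :: "(('i list \<Rightarrow> 'a::field) \<Rightarrow> ('i list \<Rightarrow> 'a)) \<Rightarrow> bool" where
  "in_GL \<theta> \<longleftrightarrow> Vector_Spaces.linear sc sc \<theta> \<and> bij_betw \<theta> (tpow 1) (tpow 1)"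

end

theory Submission imports Defs begin

lemma Ri_out: "length w \<noteq> p \<Longrightarrow> Ri Rm p i f w = 0"
  by (simp add: Ri_def)

lemma Ri_tpow: "Ri Rm p i f \<in> tpow p"
  by (simp add: Ri_def tpow_def)

lemma Ri_lincomb:
  assumes "finite A"
  shows "Ri Rm p i (\<lambda>w. \<Sum>j\<in>A. c j * f j w) = (\<lambda>w. \<Sum>j\<in>A. c j * Ri Rm p i (f j) w)"
proof (rule ext)
  fix w
  show "Ri Rm p i (\<lambda>w. \<Sum>j\<in>A. c j * f j w) w = (\<Sum>j\<in>A. c j * Ri Rm p i (f j) w)"
  proof (cases "length w = p")
    case True
    have "Ri Rm p i (\<lambda>w. \<Sum>j\<in>A. c j * f j w) w = (\<Sum>x\<in>UNIV. \<Sum>y\<in>UNIV. \<Sum>j\<in>A.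
       c j * (Rm (w ! (i - 1)) (w ! i) x y * f j (w[i - 1 := x, i := y])))"
      using True unfolding Ri_def by (simp add: sum_distrib_left mult.left_commute)
    also have "... = (\<Sum>j\<in>A. \<Sum>x\<in>UNIV. \<Sum>y\<in>UNIV.
       c j * (Rm (w ! (i - 1)) (w ! i) x y * f j (w[i - 1 := x, i := y])))"
      by (simp add: sum.swap[of _ A])
    also have "... = (\<Sum>j\<in>A. c j * Ri Rm p i (f j) w)"
      using True unfolding Ri_def by (simp add: sum_distrib_left)
    finally show ?thesis .
  qed (simp add: Ri_out)
qed

lemma Ri_add: "Ri Rm p i (\<lambda>w. f w + g w) = (\<lambda>w. Ri Rm p i f w + Ri Rm p i g w)"
  unfolding Ri_def by (auto simp: fun_eq_iff algebra_simps sum.distrib)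

lemma Ri_scale: "Ri Rm p i (\<lambda>w. c * f w) = (\<lambda>w. c * Ri Rm p i f w)"
  unfolding Ri_def by (auto simp: fun_eq_iff algebra_simps sum_distrib_left)

lemma Ri_lin2: "Ri Rm p i (\<lambda>w. a * f w + b * g w) = (\<lambda>w. a * Ri Rm p i f w + b * Ri Rm p i g w)"
  by (simp add: Ri_add Ri_scale)

lemma sum4_swap:
  "(\<Sum>c\<in>A. \<Sum>d\<in>B. \<Sum>c'\<in>C. \<Sum>d'\<in>D. G c d c' d') = (\<Sum>c'\<in>C. \<Sum>d'\<in>D. \<Sum>c\<in>A. \<Sum>d\<in>B. G c d c' d')"
proof -
  have "(\<Sum>c\<in>A. \<Sum>d\<in>B. \<Sum>c'\<in>C. \<Sum>d'\<in>D. G c d c' d') = (\<Sum>c\<in>A. \<Sum>c'\<in>C. \<Sum>d\<in>B. \<Sum>d'\<in>D. G c d c' d')"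
    by (rule sum.cong[OF refl], rule sum.swap)
  also have "... = (\<Sum>c'\<in>C. \<Sum>c\<in>A. \<Sum>d\<in>B. \<Sum>d'\<in>D. G c d c' d')"
    by (rule sum.swap)
  also have "... = (\<Sum>c'\<in>C. \<Sum>c\<in>A. \<Sum>d'\<in>D. \<Sum>d\<in>B. G c d c' d')"
    by (rule sum.cong[OF refl], rule sum.cong[OF refl], rule sum.swap)
  also have "... = (\<Sum>c'\<in>C. \<Sum>d'\<in>D. \<Sum>c\<in>A. \<Sum>d\<in>B. G c d c' d')"
    by (rule sum.cong[OF refl], rule sum.swap)
  finally show ?thesis .
qed

lemma Ri_comm0:
  fixes Rm :: "'i::finite \<Rightarrow> 'i \<Rightarrow> 'i \<Rightarrow> 'i \<Rightarrow> 'a::field"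
  assumes "Suc a + 2 \<le> Suc b"
  shows "Ri Rm p (Suc a) (Ri Rm p (Suc b) f) = Ri Rm p (Suc b) (Ri Rm p (Suc a) f)"
proof (rule ext)
  fix w :: "'i list"
  have upd: "w[a := c, Suc a := d, b := c', Suc b := d'] = w[b := c', Suc b := d', a := c, Suc a := d]"
    for c d c' d'
  proof -
    have "w[a := c, Suc a := d, b := c', Suc b := d'] = w[a := c, b := c', Suc a := d, Suc b := d']"
      using assms by (simp add: list_update_swap)
    also have "... = w[b := c', a := c, Suc b := d', Suc a := d]"
      using assms by (simp add: list_update_swap)
    also have "... = w[b := c', Suc b := d', a := c, Suc a := d]"
      using assms by (simp add: list_update_swap)
    finally show ?thesis .
  qed
  have n1: "w[a := c, Suc a := d] ! b = w ! b" "w[a := c, Suc a := d] ! Suc b = w ! Suc b"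
     "w[b := c, Suc b := d] ! a = w ! a" "w[b := c, Suc b := d] ! Suc a = w ! Suc a" for c d
    using assms by (simp_all add: nth_list_update_neq)
  show "Ri Rm p (Suc a) (Ri Rm p (Suc b) f) w = Ri Rm p (Suc b) (Ri Rm p (Suc a) f) w"
  proof (cases "length w = p")
    case True
    have "Ri Rm p (Suc a) (Ri Rm p (Suc b) f) w = (\<Sum>c\<in>UNIV. \<Sum>d\<in>UNIV. \<Sum>c'\<in>UNIV. \<Sum>d'\<in>UNIV.
        Rm (w!a) (w!Suc a) c d * (Rm (w!b) (w!Suc b) c' d' * f (w[a := c, Suc a := d, b := c', Suc b := d'])))"
      using True by (simp add: Ri_def n1 sum_distrib_left)
    also have "... = (\<Sum>c'\<in>UNIV. \<Sum>d'\<in>UNIV. \<Sum>c\<in>UNIV. \<Sum>d\<in>UNIV.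
        Rm (w!b) (w!Suc b) c' d' * (Rm (w!a) (w!Suc a) c d * f (w[b := c', Suc b := d', a := c, Suc a := d])))"
      by (subst sum4_swap, simp add: upd mult.left_commute)
    also have "... = Ri Rm p (Suc b) (Ri Rm p (Suc a) f) w"
      using True by (simp add: Ri_def n1 sum_distrib_left)
    finally show ?thesis .
  qed (simp add: Ri_out)
qed

lemma Ri_comm:
  assumes "1 \<le> i" "i + 2 \<le> j"
  shows "Ri Rm p i (Ri Rm p j f) = Ri Rm p j (Ri Rm p i f)"
  using Ri_comm0[of "i - 1" "j - 1" Rm p f] assms by simp


definition loc2 :: "('i list \<Rightarrow> 'a::field) \<Rightarrow> 'i list \<Rightarrow> nat \<Rightarrow> 'i list \<Rightarrow> 'a" where
  "loc2 f w a = (\<lambda>u. if length u = 2 then f (w[a := u!0, Suc a := u!1]) else 0)"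

definition loc3 :: "('i list \<Rightarrow> 'a::field) \<Rightarrow> 'i list \<Rightarrow> nat \<Rightarrow> 'i list \<Rightarrow> 'a" where
  "loc3 f w a = (\<lambda>u. if length u = 3 then f (w[a := u!0, Suc a := u!1, Suc (Suc a) := u!2]) else 0)"

lemma loc2_tpow: "loc2 f w a \<in> tpow 2"
  by (simp add: loc2_def tpow_def)

lemma loc3_tpow: "loc3 f w a \<in> tpow 3"
  by (simp add: loc3_def tpow_def)

lemma loc2_Ri:
  fixes Rm :: "'i::finite \<Rightarrow> 'i \<Rightarrow> 'i \<Rightarrow> 'i \<Rightarrow> 'a::field"
  assumes "length w = p" "Suc a < p"
  shows "loc2 (Ri Rm p (Suc a) h) w a = Ri Rm 2 1 (loc2 h w a)"
proof (rule ext)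
  fix u :: "'i list"
  show "loc2 (Ri Rm p (Suc a) h) w a u = Ri Rm 2 1 (loc2 h w a) u"
  proof (cases "length u = 2")
    case True
    have upd: "w[a := x, Suc a := y, a := c, Suc a := d] = w[a := c, Suc a := d]" for x y c d
      by (simp add: list_update_swap)
    have l2: "length (u[0 := c, Suc 0 := d]) = 2" for c d using True by simp
    show ?thesis using True assms
      by (simp add: loc2_def Ri_def upd l2 numeral_2_eq_2 nth_list_update)
  qed (simp add: loc2_def Ri_def)
qed

lemma loc3_Ri1:
  fixes Rm :: "'i::finite \<Rightarrow> 'i \<Rightarrow> 'i \<Rightarrow> 'i \<Rightarrow> 'a::field"
  assumes "length w = p" "Suc (Suc a) < p"
  shows "loc3 (Ri Rm p (Suc a) h) w a = Ri Rm 3 1 (loc3 h w a)"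
proof (rule ext)
  fix u :: "'i list"
  show "loc3 (Ri Rm p (Suc a) h) w a u = Ri Rm 3 1 (loc3 h w a) u"
  proof (cases "length u = 3")
    case True
    have upd: "w[a := x, Suc a := y, Suc (Suc a) := z, a := c, Suc a := d]
       = w[a := c, Suc a := d, Suc (Suc a) := z]" for x y z c d
      by (simp add: list_update_swap)
    have l2: "length (u[0 := c, Suc 0 := d]) = 3" for c d using True by simp
    show ?thesis using True assms
      by (simp add: loc3_def Ri_def upd l2 numeral_3_eq_3 nth_list_update)
  qed (simp add: loc3_def Ri_def)
qed

lemma loc3_Ri2:
  fixes Rm :: "'i::finite \<Rightarrow> 'i \<Rightarrow> 'i \<Rightarrow> 'i \<Rightarrow> 'a::field"
  assumes "length w = p" "Suc (Suc a) < p"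
  shows "loc3 (Ri Rm p (Suc (Suc a)) h) w a = Ri Rm 3 2 (loc3 h w a)"
proof (rule ext)
  fix u :: "'i list"
  show "loc3 (Ri Rm p (Suc (Suc a)) h) w a u = Ri Rm 3 2 (loc3 h w a) u"
  proof (cases "length u = 3")
    case True
    have upd: "w[a := x, Suc a := y, Suc (Suc a) := z, Suc a := c, Suc (Suc a) := d]
       = w[a := x, Suc a := c, Suc (Suc a) := d]" for x y z c d
      by (simp add: list_update_swap)
    have l2: "length (u[Suc 0 := c, 2 := d]) = 3" for c d using True by simp
    show ?thesis using True assms
      by (simp add: loc3_def Ri_def upd l2 numeral_3_eq_3 numeral_2_eq_2 nth_list_update)
  qed (simp add: loc3_def Ri_def)
qed


lemma hecke_q: "is_hecke Rm q \<Longrightarrow> q \<noteq> 0"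
  by (simp add: is_hecke_def)

lemma hecke_quad2:
  assumes "is_hecke Rm q" "g \<in> tpow 2"
  shows "Ri Rm 2 1 (Ri Rm 2 1 g) = (\<lambda>u. (q - 1) * Ri Rm 2 1 g u + q * g u)"
proof (rule ext)
  fix u
  have "Ri Rm 2 1 (Ri Rm 2 1 g + g) - sc q (Ri Rm 2 1 g + g) = 0"
    using assms by (simp add: is_hecke_def)
  then have "Ri Rm 2 1 (\<lambda>w. Ri Rm 2 1 g w + g w) u - q * (Ri Rm 2 1 g u + g u) = 0"
    by (simp add: fun_eq_iff sc_def plus_fun_def) 
  then show "Ri Rm 2 1 (Ri Rm 2 1 g) u = (q - 1) * Ri Rm 2 1 g u + q * g u"
    by (simp add: Ri_add algebra_simps)
qed

lemma hecke_braid3: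
  assumes "is_hecke Rm q" "g \<in> tpow 3"
  shows "Ri Rm 3 1 (Ri Rm 3 2 (Ri Rm 3 1 g)) = Ri Rm 3 2 (Ri Rm 3 1 (Ri Rm 3 2 g))"
  using assms by (simp add: is_hecke_def)

lemma Ri_quad:
  fixes Rm :: "'i::finite \<Rightarrow> 'i \<Rightarrow> 'i \<Rightarrow> 'i \<Rightarrow> 'a::field"
  assumes H: "is_hecke Rm q" and f: "f \<in> tpow p" and i: "1 \<le> i" "i < p"
  shows "Ri Rm p i (Ri Rm p i f) = (\<lambda>w. (q - 1) * Ri Rm p i f w + q * f w)"
proof -
  obtain a where a: "i = Suc a" using i by (cases i) auto
  have "Ri Rm p (Suc a) (Ri Rm p (Suc a) f) w = (q - 1) * Ri Rm p (Suc a) f w + q * f w" for w :: "'i list"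
  proof (cases "length w = p")
    case True
    define u where "u = [w!a, w!Suc a]"
    have wu: "w[a := u!0, Suc a := u!1] = w" using u_def by simp
    have lu: "length u = 2" using u_def by simp
    have ev: "loc2 h w a u = h w" for h using wu lu by (simp add: loc2_def)
    have sa: "Suc a < p" using a i by simp
    note L = loc2_Ri[OF True sa, of Rm]
    have "Ri Rm p (Suc a) (Ri Rm p (Suc a) f) w = loc2 (Ri Rm p (Suc a) (Ri Rm p (Suc a) f)) w a u"
      by (rule ev[symmetric])
    also have "... = Ri Rm 2 1 (Ri Rm 2 1 (loc2 f w a)) u"
      by (simp only: L)
    also have "... = (q - 1) * Ri Rm 2 1 (loc2 f w a) u + q * loc2 f w a u"
      using hecke_quad2[OF H loc2_tpow] by simp
    also have "... = (q - 1) * loc2 (Ri Rm p (Suc a) f) w a u + q * f w"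
      by (simp only: L ev)
    also have "... = (q - 1) * Ri Rm p (Suc a) f w + q * f w"
      by (simp only: ev)
    finally show ?thesis .
  next
    case False
    then show ?thesis using f by (simp add: Ri_out tpow_def)
  qed
  then show ?thesis unfolding a by (simp add: fun_eq_iff)
qed

lemma Ri_braid:
  fixes Rm :: "'i::finite \<Rightarrow> 'i \<Rightarrow> 'i \<Rightarrow> 'i \<Rightarrow> 'a::field"
  assumes H: "is_hecke Rm q" and i: "1 \<le> i" "Suc i < p"
  shows "Ri Rm p i (Ri Rm p (Suc i) (Ri Rm p i f)) = Ri Rm p (Suc i) (Ri Rm p i (Ri Rm p (Suc i) f))"
proof -
  obtain a where a: "i = Suc a" using i by (cases i) auto
  have "Ri Rm p (Suc a) (Ri Rm p (Suc (Suc a)) (Ri Rm p (Suc a) f)) w =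
        Ri Rm p (Suc (Suc a)) (Ri Rm p (Suc a) (Ri Rm p (Suc (Suc a)) f)) w" for w :: "'i list"
  proof (cases "length w = p")
    case True
    define u where "u = [w!a, w!Suc a, w!Suc (Suc a)]"
    have wu: "w[a := u!0, Suc a := u!1, Suc (Suc a) := u!2] = w" using u_def by simp
    have lu: "length u = 3" using u_def by simp
    have ev: "loc3 h w a u = h w" for h using wu lu by (simp add: loc3_def)
    have sa: "Suc (Suc a) < p" using a i by simp
    note L1 = loc3_Ri1[OF True sa, of Rm] and L2 = loc3_Ri2[OF True sa, of Rm]
    have "Ri Rm p (Suc a) (Ri Rm p (Suc (Suc a)) (Ri Rm p (Suc a) f)) w
        = loc3 (Ri Rm p (Suc a) (Ri Rm p (Suc (Suc a)) (Ri Rm p (Suc a) f))) w a u"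
      by (rule ev[symmetric])
    also have "... = Ri Rm 3 1 (Ri Rm 3 2 (Ri Rm 3 1 (loc3 f w a))) u"
      by (simp only: L1 L2)
    also have "... = Ri Rm 3 2 (Ri Rm 3 1 (Ri Rm 3 2 (loc3 f w a))) u"
      using hecke_braid3[OF H loc3_tpow] by simp
    also have "... = loc3 (Ri Rm p (Suc (Suc a)) (Ri Rm p (Suc a) (Ri Rm p (Suc (Suc a)) f))) w a u"
      by (simp only: L1 L2)
    also have "... = Ri Rm p (Suc (Suc a)) (Ri Rm p (Suc a) (Ri Rm p (Suc (Suc a)) f)) w"
      by (rule ev)
    finally show ?thesis .
  next
    case False
    then show ?thesis by (simp add: Ri_out)
  qed
  then show ?thesis unfolding a by (simp add: fun_eq_iff)
qed


lemma Rdown_tpow: "f \<in> tpow p \<Longrightarrow> Rdown Rm p k f \<in> tpow p"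
  by (cases k) (simp_all add: Ri_tpow)

lemma Rup_tpow: "f \<in> tpow p \<Longrightarrow> Rup Rm p k f \<in> tpow p"
proof (induction k arbitrary: f)
  case (Suc k)
  then show ?case by (simp add: Ri_tpow)
qed simp

lemma Rdown_lin2: "Rdown Rm p k (\<lambda>w. a * f w + b * g w) = (\<lambda>w. a * Rdown Rm p k f w + b * Rdown Rm p k g w)"
  by (induction k) (simp_all add: Ri_lin2)

lemma Rdown_scale: "Rdown Rm p k (\<lambda>w. c * f w) = (\<lambda>w. c * Rdown Rm p k f w)"
  by (induction k) (simp_all add: Ri_scale)

lemma Rup_lin2: "Rup Rm p k (\<lambda>w. a * f w + b * g w) = (\<lambda>w. a * Rup Rm p k f w + b * Rup Rm p k g w)"
  by (induction k arbitrary: f g) (simp_all add: Ri_lin2)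

lemma Rup_scale: "Rup Rm p k (\<lambda>w. c * f w) = (\<lambda>w. c * Rup Rm p k f w)"
  by (induction k arbitrary: f) (simp_all add: Ri_scale)

lemma Rdown_comm: "k + 2 \<le> j \<Longrightarrow> Ri Rm p j (Rdown Rm p k f) = Rdown Rm p k (Ri Rm p j f)"
proof (induction k)
  case (Suc k)
  have "Ri Rm p j (Ri Rm p (Suc k) (Rdown Rm p k f)) = Ri Rm p (Suc k) (Ri Rm p j (Rdown Rm p k f))"
    using Suc.prems by (intro Ri_comm[symmetric]) auto
  then show ?case using Suc by simp
qed simp

lemma Rup_comm: "k + 2 \<le> j \<Longrightarrow> Ri Rm p j (Rup Rm p k f) = Rup Rm p k (Ri Rm p j f)"
proof (induction k arbitrary: f)
  case (Suc k)
  have "Ri Rm p j (Ri Rm p (Suc k) f) = Ri Rm p (Suc k) (Ri Rm p j f)"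
    using Suc.prems by (intro Ri_comm[symmetric]) auto
  then show ?case using Suc by simp
qed simp

lemma Rdown_conj:
  fixes Rm :: "'i::finite \<Rightarrow> 'i \<Rightarrow> 'i \<Rightarrow> 'i \<Rightarrow> 'a::field"
  assumes H: "is_hecke Rm q"
  shows "1 \<le> i \<Longrightarrow> i + 1 \<le> k \<Longrightarrow> k < p \<Longrightarrow> Rdown Rm p k (Ri Rm p (Suc i) f) = Ri Rm p i (Rdown Rm p k f)"
proof (induction k arbitrary: i)
  case 0
  then show ?case by simp
next
  case (Suc k)
  show ?case
  proof (cases "i + 1 \<le> k")
    case True
    then have "Rdown Rm p (Suc k) (Ri Rm p (Suc i) f) = Ri Rm p (Suc k) (Ri Rm p i (Rdown Rm p k f))"
      using Suc by simp
    also have "... = Ri Rm p i (Ri Rm p (Suc k) (Rdown Rm p k f))"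
      using True Suc.prems by (intro Ri_comm[symmetric]) auto
    finally show ?thesis by simp
  next
    case False
    then have ik: "i = k" using Suc.prems by simp
    then obtain k' where k': "k = Suc k'" using Suc.prems by (cases k) auto
    have "Rdown Rm p (Suc k) (Ri Rm p (Suc i) f) = Ri Rm p (Suc i) (Ri Rm p i (Rdown Rm p k' (Ri Rm p (Suc i) f)))"
      using ik k' by simp
    also have "... = Ri Rm p (Suc i) (Ri Rm p i (Ri Rm p (Suc i) (Rdown Rm p k' f)))"
      using ik k' by (simp add: Rdown_comm)
    also have "... = Ri Rm p i (Ri Rm p (Suc i) (Ri Rm p i (Rdown Rm p k' f)))"
      using Ri_braid[OF H, of i p] Suc.prems ik by simp
    also have "... = Ri Rm p i (Rdown Rm p (Suc k) f)"
      using ik k' by simp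
    finally show ?thesis .
  qed
qed

lemma Rup_conj:
  fixes Rm :: "'i::finite \<Rightarrow> 'i \<Rightarrow> 'i \<Rightarrow> 'i \<Rightarrow> 'a::field"
  assumes H: "is_hecke Rm q"
  shows "1 \<le> i \<Longrightarrow> i + 1 \<le> k \<Longrightarrow> k < p \<Longrightarrow> Rup Rm p k (Ri Rm p i f) = Ri Rm p (Suc i) (Rup Rm p k f)"
proof (induction k arbitrary: i f)
  case 0
  then show ?case by simp
next
  case (Suc k)
  show ?case
  proof (cases "i + 1 \<le> k")
    case True
    have c: "Ri Rm p (Suc k) (Ri Rm p i f) = Ri Rm p i (Ri Rm p (Suc k) f)"
      using True Suc.prems by (intro Ri_comm[symmetric]) auto
    have "Rup Rm p (Suc k) (Ri Rm p i f) = Rup Rm p k (Ri Rm p i (Ri Rm p (Suc k) f))"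
      using c by simp
    also have "... = Ri Rm p (Suc i) (Rup Rm p k (Ri Rm p (Suc k) f))"
      using Suc True by simp
    finally show ?thesis by simp
  next
    case False
    then have ik: "i = k" using Suc.prems by simp
    then obtain k' where k': "k = Suc k'" using Suc.prems by (cases k) auto
    have "Rup Rm p (Suc k) (Ri Rm p i f) = Rup Rm p k' (Ri Rm p i (Ri Rm p (Suc i) (Ri Rm p i f)))"
      using ik k' by simp
    also have "... = Rup Rm p k' (Ri Rm p (Suc i) (Ri Rm p i (Ri Rm p (Suc i) f)))"
      using Ri_braid[OF H, of i p] Suc.prems ik by simp
    also have "... = Ri Rm p (Suc i) (Rup Rm p k' (Ri Rm p i (Ri Rm p (Suc i) f)))"
      using ik k' by (simp add: Rup_comm)
    also have "... = Ri Rm p (Suc i) (Rup Rm p (Suc k) f)"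
      using ik k' by simp
    finally show ?thesis .
  qed
qed

lemma Ri_inj:
  fixes Rm :: "'i::finite \<Rightarrow> 'i \<Rightarrow> 'i \<Rightarrow> 'i \<Rightarrow> 'a::field"
  assumes H: "is_hecke Rm q" and f: "f \<in> tpow p" and i: "1 \<le> i" "i < p" and z: "Ri Rm p i f = 0"
  shows "f = 0"
proof -
  have "Ri Rm p i (Ri Rm p i f) = (\<lambda>w. (q - 1) * Ri Rm p i f w + q * f w)"
    by (rule Ri_quad[OF H f i])
  moreover have "Ri Rm p i (Ri Rm p i f) = 0"
    using z Ri_scale[of Rm p i 0 "\<lambda>w. 0"] by (simp add: zero_fun_def)
  ultimately have "\<forall>w. q * f w = 0" using z by (simp add: fun_eq_iff)
  then show ?thesis using hecke_q[OF H] by (simp add: fun_eq_iff)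
qed

lemma Rup_inj:
  fixes Rm :: "'i::finite \<Rightarrow> 'i \<Rightarrow> 'i \<Rightarrow> 'i \<Rightarrow> 'a::field"
  assumes H: "is_hecke Rm q"
  shows "f \<in> tpow p \<Longrightarrow> k < p \<Longrightarrow> Rup Rm p k f = 0 \<Longrightarrow> f = 0"
proof (induction k arbitrary: f)
  case (Suc k)
  then have "Ri Rm p (Suc k) f = 0" using Ri_tpow[of Rm p "Suc k" f] by (simp add: zero_fun_def)
  moreover have "1 \<le> Suc k" "Suc k < p" using Suc.prems by auto
  ultimately show ?case using Ri_inj[OF H Suc.prems(1)] by blast
qed simp


lemma Ri_zero: "Ri Rm p i (\<lambda>w. 0) = (\<lambda>w. 0)"
  by (simp add: Ri_def fun_eq_iff)

lemma Rdown_zero: "Rdown Rm p k (\<lambda>w. 0) = (\<lambda>w. 0)"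
  by (induction k) (simp_all add: Ri_zero)

lemma alt_split:
  fixes q :: "'a::field"
  assumes "k \<le> n"
  shows "(\<Sum>j\<in>{k..n}. (-1)^(j - k) * q^(n-j) * F j) =
    q^(n - k) * F k - (\<Sum>j\<in>{Suc k..n}. (-1)^(j - Suc k) * q^(n-j) * F j)"
proof -
  have "(\<Sum>j\<in>{Suc k..n}. (-1)^(j - k) * q^(n-j) * F j) = (\<Sum>j\<in>{Suc k..n}. - ((-1)^(j - Suc k) * q^(n-j) * F j))"
  proof (rule sum.cong[OF refl])
    fix j assume "j \<in> {Suc k..n}"
    then have "j - k = Suc (j - Suc k)" by auto
    then show "(-1)^(j - k) * q^(n-j) * F j = - ((-1)^(j - Suc k) * q^(n-j) * F j)" by simp
  qed
  then show ?thesis using assms by (simp add: sum.atLeast_Suc_atMost sum_negf)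
qed

locale core =
  fixes Rm :: "'i::finite \<Rightarrow> 'i \<Rightarrow> 'i \<Rightarrow> 'i \<Rightarrow> 'a::field" and q :: 'a and n :: nat and x :: "'i list \<Rightarrow> 'a"
  assumes H: "is_hecke Rm q" and xt: "x \<in> tpow (Suc n)"
begin

abbreviation "y k \<equiv> Rdown Rm (Suc n) k x"

definition D :: "nat \<Rightarrow> 'i list \<Rightarrow> 'a" where
  "D k = (\<lambda>w. \<Sum>j\<in>{Suc k..n}. (-1)^(j - Suc k) * q^(n-j) * y j w)"

lemma y_tpow: "y k \<in> tpow (Suc n)"
  using xt by (rule Rdown_tpow)

lemma MR2: "1 \<le> k \<Longrightarrow> k \<le> n \<Longrightarrow> Ri Rm (Suc n) k (y k) = (\<lambda>w. (q - 1) * y k w + q * y (k - 1) w)"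
proof -
  assume k: "1 \<le> k" "k \<le> n"
  then obtain k' where k': "k = Suc k'" by (cases k) auto
  show ?thesis using Ri_quad[OF H y_tpow[of k'], of k] k k' by simp
qed

lemma MR3:
  assumes Kx: "\<forall>j. 2 \<le> j \<and> j \<le> n \<longrightarrow> Ri Rm (Suc n) j x = (\<lambda>w. - x w)"
    and i: "1 \<le> i" "i + 1 \<le> k" "k \<le> n"
  shows "Ri Rm (Suc n) i (y k) = (\<lambda>w. - y k w)"
proof -
  have "Ri Rm (Suc n) i (y k) = Rdown Rm (Suc n) k (Ri Rm (Suc n) (Suc i) x)"
    using Rdown_conj[OF H, of i k "Suc n" x] i by simp
  also have "... = Rdown Rm (Suc n) k (\<lambda>w. (-1) * x w)"
    using Kx i by simp
  also have "... = (\<lambda>w. - y k w)"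
    using Rdown_scale[of Rm "Suc n" k "-1" x] by simp
  finally show ?thesis .
qed

lemma D_split: "Suc k \<le> n \<Longrightarrow> D k = (\<lambda>w. q^(n - Suc k) * y (Suc k) w - D (Suc k) w)"
  unfolding D_def by (simp add: alt_split)

lemma D_n: "D n = (\<lambda>w. 0)"
  by (simp add: D_def)

lemma RD:
  assumes Kx: "\<forall>j. 2 \<le> j \<and> j \<le> n \<longrightarrow> Ri Rm (Suc n) j x = (\<lambda>w. - x w)"
    and k: "1 \<le> k"
  shows "Ri Rm (Suc n) k (D k) = (\<lambda>w. - D k w)"
proof -
  have "Ri Rm (Suc n) k (D k) = (\<lambda>w. \<Sum>j\<in>{Suc k..n}. (-1)^(j - Suc k) * q^(n-j) * Ri Rm (Suc n) k (y j) w)"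
    unfolding D_def by (rule Ri_lincomb) simp
  also have "... = (\<lambda>w. \<Sum>j\<in>{Suc k..n}. (-1)^(j - Suc k) * q^(n-j) * (- y j w))"
    using MR3[OF Kx] k by (intro ext sum.cong) auto
  also have "... = (\<lambda>w. - D k w)"
    by (simp add: D_def sum_negf)
  finally show ?thesis .
qed

lemma core_W:
  assumes Kx: "\<forall>j. 2 \<le> j \<and> j \<le> n \<longrightarrow> Ri Rm (Suc n) j x = (\<lambda>w. - x w)"
  shows "m \<le> n \<Longrightarrow> Rup Rm (Suc n) n (y n) = Rup Rm (Suc n) (n - m) (\<lambda>w. q^m * y (n - m) w + (q - 1) * D (n - m) w)"
proof (induction m)
  case 0
  then show ?case by (simp add: D_n)
next
  case (Suc m)
  define k where "k = n - Suc m"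
  have nm: "n - m = Suc k" "Suc k \<le> n" "n - Suc k = m" using Suc.prems k_def by auto
  have "Ri Rm (Suc n) (Suc k) (\<lambda>w. q^m * y (Suc k) w + (q - 1) * D (Suc k) w)
      = (\<lambda>w. q^m * Ri Rm (Suc n) (Suc k) (y (Suc k)) w + (q - 1) * Ri Rm (Suc n) (Suc k) (D (Suc k)) w)"
    by (rule Ri_lin2)
  also have "... = (\<lambda>w. q^m * ((q - 1) * y (Suc k) w + q * y k w) + (q - 1) * (- D (Suc k) w))"
    using MR2[of "Suc k"] RD[OF Kx, of "Suc k"] nm by simp
  also have "... = (\<lambda>w. q^(Suc m) * y k w + (q - 1) * (q^m * y (Suc k) w - D (Suc k) w))"
  proof (rule ext)
    fix w
    have r: "q^m * ((q - 1) * Y1 + q * Y0) + (q - 1) * (- D1) = q^(Suc m) * Y0 + (q - 1) * (q^m * Y1 - D1)"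
      for Y1 Y0 D1 :: 'a by (simp add: algebra_simps)
    show "q^m * ((q - 1) * y (Suc k) w + q * y k w) + (q - 1) * (- D (Suc k) w)
        = q^(Suc m) * y k w + (q - 1) * (q^m * y (Suc k) w - D (Suc k) w)" by (rule r)
  qed
  also have "... = (\<lambda>w. q^(Suc m) * y k w + (q - 1) * D k w)"
    using D_split[of k] nm by simp
  finally have st: "Ri Rm (Suc n) (Suc k) (\<lambda>w. q^m * y (Suc k) w + (q - 1) * D (Suc k) w)
      = (\<lambda>w. q^(Suc m) * y k w + (q - 1) * D k w)" .
  have "Rup Rm (Suc n) n (y n) = Rup Rm (Suc n) (Suc k) (\<lambda>w. q^m * y (Suc k) w + (q - 1) * D (Suc k) w)"
    using Suc nm by simp
  also have "... = Rup Rm (Suc n) k (\<lambda>w. q^(Suc m) * y k w + (q - 1) * D k w)"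
    using st by simp
  finally show ?case using k_def by simp
qed

definition E :: "'i list \<Rightarrow> 'a" where
  "E = (\<lambda>w. \<Sum>j\<in>{0..n}. (-1)^j * q^(n-j) * y j w)"

lemma E_D: "E = (\<lambda>w. q^n * y 0 w - D 0 w)"
  unfolding E_def D_def using alt_split[of 0 n q] by simp

lemma E_tpow: "E \<in> tpow (Suc n)"
  using y_tpow by (simp add: E_def tpow_def)

lemma E_im:
  assumes A: "\<forall>j. 2 \<le> j \<and> j \<le> n \<longrightarrow> A j \<in> tpow (Suc n) \<and> x = (\<lambda>w. Ri Rm (Suc n) j (A j) w - q * A j w)"
    and i: "1 \<le> i" "i \<le> n"
  shows "\<exists>g\<in>tpow (Suc n). E = (\<lambda>w. Ri Rm (Suc n) i g w - q * g w)"
proof -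
  obtain a where a: "i = Suc a" using i by (cases i) auto
  define c where "c j = (-1::'a)^j * q^(n-j)" for j
  define G where "G j = (if Suc j < i then Rdown Rm (Suc n) j (A i) else if Suc j = i then (\<lambda>w. 0)
      else if j = i then y a else Rdown Rm (Suc n) j (A (Suc i)))" for j
  define g where "g = (\<lambda>w. \<Sum>j\<in>{0..n}. c j * G j w)"
  have Gt: "G j \<in> tpow (Suc n)" if "j \<le> n" for j
  proof -
    have 1: "Suc j < i \<Longrightarrow> A i \<in> tpow (Suc n)" using A i by auto
    have 2: "\<not> Suc j < i \<Longrightarrow> Suc j \<noteq> i \<Longrightarrow> j \<noteq> i \<Longrightarrow> A (Suc i) \<in> tpow (Suc n)"
      using A i that by auto
    have 3: "(\<lambda>w. 0) \<in> tpow (Suc n)" by (simp add: tpow_def)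
    show ?thesis unfolding G_def using 1 2 3 y_tpow Rdown_tpow by auto
  qed
  have gt: "g \<in> tpow (Suc n)"
    using Gt unfolding g_def tpow_def by auto
  have Hd: "(\<lambda>w. Ri Rm (Suc n) i (G j) w - q * G j w) =
     (if Suc j = i then (\<lambda>w. 0) else if j = i then (\<lambda>w. y i w - q * y a w) else y j)"
    if j: "j \<le> n" for j
  proof -
    consider (lt) "Suc j < i" | (eq1) "Suc j = i" | (eq) "j = i" | (gt) "i < j" by linarith
    then show ?thesis
    proof cases
      case lt
      have Ai: "x = (\<lambda>w. 1 * Ri Rm (Suc n) i (A i) w + (- q) * A i w)" using A lt i by simp
      have "y j = (\<lambda>w. 1 * Rdown Rm (Suc n) j (Ri Rm (Suc n) i (A i)) w + (- q) * Rdown Rm (Suc n) j (A i) w)"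
        by (subst Ai, rule Rdown_lin2)
      also have "... = (\<lambda>w. Ri Rm (Suc n) i (G j) w - q * G j w)"
        using lt by (simp add: G_def Rdown_comm)
      finally show ?thesis using lt by simp
    next
      case eq1
      then show ?thesis by (simp add: G_def Ri_zero)
    next
      case eq
      then show ?thesis using a by (simp add: G_def)
    next
      case gt
      have Ai: "x = (\<lambda>w. 1 * Ri Rm (Suc n) (Suc i) (A (Suc i)) w + (- q) * A (Suc i) w)" using A gt i j by simp
      have "y j = (\<lambda>w. 1 * Rdown Rm (Suc n) j (Ri Rm (Suc n) (Suc i) (A (Suc i))) w + (- q) * Rdown Rm (Suc n) j (A (Suc i)) w)"
        by (subst Ai, rule Rdown_lin2)
      also have "... = (\<lambda>w. Ri Rm (Suc n) i (G j) w - q * G j w)"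
        using gt i j by (simp add: G_def Rdown_conj[OF H])
      finally show ?thesis using gt by simp
    qed
  qed
  have "E w = Ri Rm (Suc n) i g w - q * g w" for w
  proof -
    have "Ri Rm (Suc n) i g w - q * g w = (\<Sum>j\<in>{0..n}. c j * Ri Rm (Suc n) i (G j) w) - q * (\<Sum>j\<in>{0..n}. c j * G j w)"
      unfolding g_def by (subst Ri_lincomb) simp_all
    also have "... = (\<Sum>j\<in>{0..n}. c j * (Ri Rm (Suc n) i (G j) w - q * G j w))"
      by (simp add: sum_distrib_left sum_subtractf algebra_simps)
    also have "... = (\<Sum>j\<in>{0..n}. c j * (if Suc j = i then 0 else if j = i then y i w - q * y a w else y j w))"
    proof (rule sum.cong[OF refl])
      fix j assume "j \<in> {0..n}"
      then have "Ri Rm (Suc n) i (G j) w - q * G j w = (if Suc j = i then 0 else if j = i then y i w - q * y a w else y j w)"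
        using Hd[of j] by (auto simp: fun_eq_iff split: if_splits)
      then show "c j * (Ri Rm (Suc n) i (G j) w - q * G j w) = c j * (if Suc j = i then 0 else if j = i then y i w - q * y a w else y j w)"
        by simp
    qed
    finally have e1: "Ri Rm (Suc n) i g w - q * g w = (\<Sum>j\<in>{0..n}. c j * (if Suc j = i then 0 else if j = i then y i w - q * y a w else y j w))" .
    have "(\<Sum>j\<in>{0..n}. c j * (if Suc j = i then 0 else if j = i then y i w - q * y a w else y j w) - c j * y j w)
       = (\<Sum>j\<in>{a, i}. c j * (if Suc j = i then 0 else if j = i then y i w - q * y a w else y j w) - c j * y j w)"
      using a i by (intro sum.mono_neutral_right) auto
    also have "... = - c a * y a w + c i * (- q * y a w)"
      using a by (simp add: algebra_simps)
    also have "... = 0"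
    proof -
      have "n - a = Suc (n - i)" using a i by simp
      then show ?thesis using a by (simp add: c_def)
    qed
    finally have "(\<Sum>j\<in>{0..n}. c j * (if Suc j = i then 0 else if j = i then y i w - q * y a w else y j w)) = (\<Sum>j\<in>{0..n}. c j * y j w)"
      by (simp add: sum_subtractf)
    then show ?thesis using e1 by (simp add: E_def c_def)
  qed
  then show ?thesis using gt by auto
qed

lemma P_K:
  assumes "g \<in> tpow (Suc n)" "1 \<le> j" "j < Suc n"
  shows "Ri Rm (Suc n) j (\<lambda>w. Ri Rm (Suc n) j g w - q * g w) = (\<lambda>w. - (Ri Rm (Suc n) j g w - q * g w))"
proof -
  have "Ri Rm (Suc n) j (\<lambda>w. 1 * Ri Rm (Suc n) j g w + (- q) * g w)
     = (\<lambda>w. 1 * Ri Rm (Suc n) j (Ri Rm (Suc n) j g) w + (- q) * Ri Rm (Suc n) j g w)"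
    by (rule Ri_lin2)
  then show ?thesis using Ri_quad[OF H assms] by (simp add: fun_eq_iff algebra_simps)
qed

lemma core_main:
  assumes A: "\<forall>j. 2 \<le> j \<and> j \<le> n \<longrightarrow> (\<exists>a\<in>tpow (Suc n). x = (\<lambda>w. Ri Rm (Suc n) j a w - q * a w))"
    and top0: "Ups Rm q (Suc n) = {0}"
  shows "Rup Rm (Suc n) n (y n) = (\<lambda>w. q^(Suc n) * x w)"
proof -
  obtain A where A': "\<forall>j. 2 \<le> j \<and> j \<le> n \<longrightarrow> A j \<in> tpow (Suc n) \<and> x = (\<lambda>w. Ri Rm (Suc n) j (A j) w - q * A j w)"
    using A by metis
  have Kx: "\<forall>j. 2 \<le> j \<and> j \<le> n \<longrightarrow> Ri Rm (Suc n) j x = (\<lambda>w. - x w)"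
  proof (intro allI impI)
    fix j assume j: "2 \<le> j \<and> j \<le> n"
    then have "x = (\<lambda>w. Ri Rm (Suc n) j (A j) w - q * A j w)" "A j \<in> tpow (Suc n)" using A' by auto
    then show "Ri Rm (Suc n) j x = (\<lambda>w. - x w)" using P_K[of "A j" j] j by simp
  qed
  have "E \<in> Ups Rm q (Suc n)"
    unfolding Ups_def
  proof (intro CollectI conjI allI impI E_tpow)
    fix i assume i: "1 \<le> i \<and> i \<le> Suc n - 1"
    then obtain g where "g \<in> tpow (Suc n)" "E = (\<lambda>w. Ri Rm (Suc n) i g w - q * g w)"
      using E_im[OF A', of i] by auto
    then show "\<exists>g\<in>tpow (Suc n). E = Ri Rm (Suc n) i g - sc q g"
      by (auto simp: sc_def fun_eq_iff)
  qed
  then have "E = 0" using top0 by simp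
  then have D0: "D 0 w = q^n * x w" for w using E_D by (simp add: fun_eq_iff)
  have "Rup Rm (Suc n) n (y n) = Rup Rm (Suc n) (n - n) (\<lambda>w. q^n * y (n - n) w + (q - 1) * D (n - n) w)"
    using core_W[OF Kx, of n] by simp
  also have "... = (\<lambda>w. q^(Suc n) * x w)"
    using D0 by (simp add: fun_eq_iff algebra_simps)
  finally show ?thesis .
qed

end

lemma tmul_tpow: "f \<in> tpow a \<Longrightarrow> g \<in> tpow b \<Longrightarrow> tmul a f g \<in> tpow (a + b)"
proof -
  assume f: "f \<in> tpow a" and g: "g \<in> tpow b"
  have "tmul a f g w = 0" if w: "length w \<noteq> a + b" for w
  proof (cases "a \<le> length w")
    case True
    then have "length (drop a w) \<noteq> b" using w by simp
    then show ?thesis using g by (simp add: tmul_def tpow_def)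
  next
    case False
    then have "length (take a w) \<noteq> a" by simp
    then show ?thesis using f by (simp add: tmul_def tpow_def)
  qed
  then show ?thesis by (simp add: tpow_def)
qed

lemma tmul_left_lin: "tmul a (\<lambda>w. c1 * f w + c2 * f' w) g = (\<lambda>w. c1 * tmul a f g w + c2 * tmul a f' g w)"
  by (simp add: tmul_def fun_eq_iff algebra_simps)

lemma tmul_right_lin: "tmul a f (\<lambda>w. c1 * g w + c2 * g' w) = (\<lambda>w. c1 * tmul a f g w + c2 * tmul a f g' w)"
  by (simp add: tmul_def fun_eq_iff algebra_simps)

lemma TL1:
  fixes Rm :: "'i::finite \<Rightarrow> 'i \<Rightarrow> 'i \<Rightarrow> 'i \<Rightarrow> 'a::field"
  assumes v: "v \<in> tpow 1" and i: "1 \<le> i"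
  shows "Ri Rm (Suc m) (Suc i) (tmul 1 v g) = tmul 1 v (Ri Rm m i g)"
proof (rule ext)
  fix w :: "'i list"
  obtain a where a: "i = Suc a" using i by (cases i) auto
  show "Ri Rm (Suc m) (Suc i) (tmul 1 v g) w = tmul 1 v (Ri Rm m i g) w"
  proof (cases w)
    case Nil
    then show ?thesis using v by (simp add: Ri_def tmul_def tpow_def)
  next
    case (Cons b w')
    then show ?thesis using a
      by (simp add: Ri_def tmul_def sum_distrib_left sum_distrib_right mult.assoc mult.left_commute)
  qed
qed

lemma TR1:
  fixes Rm :: "'i::finite \<Rightarrow> 'i \<Rightarrow> 'i \<Rightarrow> 'i \<Rightarrow> 'a::field"
  assumes v: "v \<in> tpow 1" and i: "1 \<le> i" "i < m"
  shows "Ri Rm (Suc m) i (tmul m g v) = tmul m (Ri Rm m i g) v"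
proof (rule ext)
  fix w :: "'i list"
  obtain a where a: "i = Suc a" using i by (cases i) auto
  show "Ri Rm (Suc m) i (tmul m g v) w = tmul m (Ri Rm m i g) v w"
  proof (cases "length w = Suc m")
    case True
    have e: "take m (w[a := c, Suc a := d]) = (take m w)[a := c, Suc a := d]" for c d
      by (simp add: take_update_swap)
    have e2: "drop m (w[a := c, Suc a := d]) = drop m w" for c d
      using a i by (simp add: drop_update_cancel)
    have e3: "take m w ! a = w ! a" "take m w ! Suc a = w ! Suc a" using a i by auto
    show ?thesis using True a
      by (simp add: Ri_def tmul_def e e2 e3 sum_distrib_right mult.assoc mult.left_commute)
  next
    case False
    show ?thesis
    proof (cases "m \<le> length w")
      case True
      then have "length (drop m w) \<noteq> 1" using False by simp
      then show ?thesis using False v by (simp add: Ri_out tmul_def tpow_def)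
    next
      case c2: False
      then have "length (take m w) \<noteq> m" by simp
      then show ?thesis using False by (simp add: Ri_out tmul_def)
    qed
  qed
qed

lemma slice_right:
  fixes Rm :: "'i::finite \<Rightarrow> 'i \<Rightarrow> 'i \<Rightarrow> 'i \<Rightarrow> 'a::field"
  assumes w: "length w = n" and i: "1 \<le> i" "i < n"
  shows "Ri Rm (Suc n) i G (w @ [b]) = Ri Rm n i (\<lambda>u. if length u = n then G (u @ [b]) else 0) w"
proof -
  obtain a where a: "i = Suc a" using i by (cases i) auto
  have e: "(w @ [b])[a := c, Suc a := d] = w[a := c, Suc a := d] @ [b]" for c d
    using a i w by (simp add: list_update_append1)
  show ?thesis using a i w by (simp add: Ri_def e nth_append)
qed

lemma slice_left:
  fixes Rm :: "'i::finite \<Rightarrow> 'i \<Rightarrow> 'i \<Rightarrow> 'i \<Rightarrow> 'a::field"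
  assumes w: "length w = n" and i: "1 \<le> i"
  shows "Ri Rm (Suc n) (Suc i) G (b # w) = Ri Rm n i (\<lambda>u. if length u = n then G (b # u) else 0) w"
proof -
  obtain a where a: "i = Suc a" using i by (cases i) auto
  show ?thesis using a w by (simp add: Ri_def)
qed

lemma dim1_mult:
  assumes d: "tens.dim S = 1" and t: "t \<in> S" "t \<noteq> 0" and f: "f \<in> S"
  shows "\<exists>k. f = sc k t"
proof -
  obtain B where B: "B \<subseteq> S" "tens.independent B" "S \<subseteq> tens.span B" "card B = tens.dim S"
    by (rule tens.basis_exists)
  then obtain e where e: "B = {e}" using d by (metis card_1_singletonE)
  then have S: "S \<subseteq> range (\<lambda>k. sc k e)" using B tens.span_singleton by auto
  obtain k1 where k1: "t = sc k1 e" using S t by auto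
  obtain k2 where k2: "f = sc k2 e" using S f by auto
  have "k1 \<noteq> 0" using k1 t by (auto simp: sc_def fun_eq_iff)
  then have "f = sc (k2 / k1) t" using k1 k2 by (simp add: sc_def fun_eq_iff)
  then show ?thesis by blast
qed


lemma decomp_right:
  fixes Rm :: "'i::finite \<Rightarrow> 'i \<Rightarrow> 'i \<Rightarrow> 'i \<Rightarrow> 'a::field"
  assumes d: "tens.dim (Ups Rm q n) = 1" and t: "t \<in> Ups Rm q n" "t \<noteq> 0" and F: "F \<in> tpow (Suc n)"
    and FP: "\<forall>i. 1 \<le> i \<and> i \<le> n - 1 \<longrightarrow> (\<exists>G\<in>tpow (Suc n). F = (\<lambda>w. Ri Rm (Suc n) i G w - q * G w))"
  shows "\<exists>u\<in>tpow 1. F = tmul n t u"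
proof -
  define Fb where "Fb b = (\<lambda>u. if length u = n then F (u @ [b]) else 0)" for b
  have Fb_in: "Fb b \<in> Ups Rm q n" for b
    unfolding Ups_def
  proof (intro CollectI conjI allI impI)
    show "Fb b \<in> tpow n" by (simp add: Fb_def tpow_def)
    fix i assume i: "1 \<le> i \<and> i \<le> n - 1"
    then obtain G where G: "G \<in> tpow (Suc n)" "F = (\<lambda>w. Ri Rm (Suc n) i G w - q * G w)" using FP by blast
    define Gb where "Gb = (\<lambda>u. if length u = n then G (u @ [b]) else 0)"
    have "Gb \<in> tpow n" by (simp add: Gb_def tpow_def)
    moreover have "Fb b = Ri Rm n i Gb - sc q Gb"
    proof (rule ext)
      fix u :: "'i list"
      show "Fb b u = (Ri Rm n i Gb - sc q Gb) u"
      proof (cases "length u = n")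
        case True
        have i2: "1 \<le> i" "i < n" using i by auto
        show ?thesis using slice_right[OF True i2, of Rm G b] True G(2)
          by (simp add: Fb_def Gb_def sc_def)
      next
        case False then show ?thesis by (simp add: Fb_def Gb_def sc_def Ri_out)
      qed
    qed
    ultimately show "\<exists>g\<in>tpow n. Fb b = Ri Rm n i g - sc q g" by blast
  qed
  then have "\<forall>b. \<exists>k. Fb b = sc k t" using dim1_mult[OF d t] by blast
  then obtain \<kappa> where \<kappa>: "\<forall>b. Fb b = sc (\<kappa> b) t" by metis
  define u where "u = (\<lambda>w::'i list. if length w = 1 then \<kappa> (hd w) else 0)"
  have "u \<in> tpow 1" by (simp add: u_def tpow_def)
  moreover have "F = tmul n t u"
  proof (rule ext)
    fix w :: "'i list"
    show "F w = tmul n t u w"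
    proof (cases "length w = Suc n")
      case True
      define b where "b = w ! n"
      have w: "w = take n w @ [b]" using True b_def take_Suc_conv_app_nth[of n w] by simp
      have dw: "drop n w = [b]" using True b_def Cons_nth_drop_Suc[of n w] by simp
      have "F w = Fb b (take n w)" using True by (subst w) (simp add: Fb_def)
      also have "... = \<kappa> b * t (take n w)" using \<kappa> by (simp add: sc_def)
      also have "... = tmul n t u w" using dw True by (simp add: tmul_def u_def)
      finally show ?thesis .
    next
      case False
      then have "F w = 0" using F by (simp add: tpow_def)
      moreover have "length (drop n w) \<noteq> 1" using False by simp
      then have "u (drop n w) = 0" by (simp add: u_def)
      ultimately show ?thesis by (simp add: tmul_def)
    qed
  qed
  ultimately show ?thesis by blast
qed

lemma decomp_left:
  fixes Rm :: "'i::finite \<Rightarrow> 'i \<Rightarrow> 'i \<Rightarrow> 'i \<Rightarrow> 'a::field"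
  assumes d: "tens.dim (Ups Rm q n) = 1" and t: "t \<in> Ups Rm q n" "t \<noteq> 0" and F: "F \<in> tpow (Suc n)"
    and FP: "\<forall>i. 2 \<le> i \<and> i \<le> n \<longrightarrow> (\<exists>G\<in>tpow (Suc n). F = (\<lambda>w. Ri Rm (Suc n) i G w - q * G w))"
  shows "\<exists>u\<in>tpow 1. F = tmul 1 u t"
proof -
  have tt: "t \<in> tpow n" using t by (simp add: Ups_def)
  define Fb where "Fb b = (\<lambda>u. if length u = n then F (b # u) else 0)" for b
  have Fb_in: "Fb b \<in> Ups Rm q n" for b
    unfolding Ups_def
  proof (intro CollectI conjI allI impI)
    show "Fb b \<in> tpow n" by (simp add: Fb_def tpow_def)
    fix i assume i: "1 \<le> i \<and> i \<le> n - 1"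
    then have si: "2 \<le> Suc i \<and> Suc i \<le> n" by arith
    then obtain G where G: "G \<in> tpow (Suc n)" "F = (\<lambda>w. Ri Rm (Suc n) (Suc i) G w - q * G w)"
      using FP by blast
    define Gb where "Gb = (\<lambda>u. if length u = n then G (b # u) else 0)"
    have "Gb \<in> tpow n" by (simp add: Gb_def tpow_def)
    moreover have "Fb b = Ri Rm n i Gb - sc q Gb"
    proof (rule ext)
      fix u :: "'i list"
      show "Fb b u = (Ri Rm n i Gb - sc q Gb) u"
      proof (cases "length u = n")
        case True
        have i2: "1 \<le> i" using i by auto
        show ?thesis using slice_left[OF True i2, of Rm G b] True G(2)
          by (simp add: Fb_def Gb_def sc_def)
      next
        case False then show ?thesis by (simp add: Fb_def Gb_def sc_def Ri_out)
      qed
    qed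
    ultimately show "\<exists>g\<in>tpow n. Fb b = Ri Rm n i g - sc q g" by blast
  qed
  then have "\<forall>b. \<exists>k. Fb b = sc k t" using dim1_mult[OF d t] by blast
  then obtain \<kappa> where \<kappa>: "\<forall>b. Fb b = sc (\<kappa> b) t" by metis
  define u where "u = (\<lambda>w::'i list. if length w = 1 then \<kappa> (hd w) else 0)"
  have "u \<in> tpow 1" by (simp add: u_def tpow_def)
  moreover have "F = tmul 1 u t"
  proof (rule ext)
    fix w :: "'i list"
    show "F w = tmul 1 u t w"
    proof (cases "length w = Suc n")
      case True
      then obtain b w' where w: "w = b # w'" by (cases w) auto
      then have lw: "length w' = n" using True by simp
      have "F w = Fb b w'" using w lw by (simp add: Fb_def)
      also have "... = \<kappa> b * t w'" using \<kappa> by (simp add: sc_def)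
      also have "... = tmul 1 u t w" using w by (simp add: tmul_def u_def)
      finally show ?thesis .
    next
      case False
      then have "F w = 0" using F by (simp add: tpow_def)
      moreover have "u (take 1 w) * t (drop 1 w) = 0"
      proof (cases w)
        case Nil then show ?thesis by (simp add: u_def)
      next
        case (Cons b w')
        then have "length w' \<noteq> n" using False by simp
        then show ?thesis using Cons tt by (simp add: tpow_def)
      qed
      ultimately show ?thesis by (simp add: tmul_def)
    qed
  qed
  ultimately show ?thesis by blast
qed

lemma linear_by:
  fixes f :: "('i list \<Rightarrow> 'a::field) \<Rightarrow> ('i list \<Rightarrow> 'a)"
  assumes "\<And>x y. f (x + y) = f x + f y" "\<And>c x. f (sc c x) = sc c (f x)"
  shows "Vector_Spaces.linear sc sc f"
proof -
  have "vector_space (sc :: 'a \<Rightarrow> ('i list \<Rightarrow> 'a) \<Rightarrow> _)" by (rule tens.vector_space_axioms)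
  then show ?thesis unfolding Vector_Spaces.linear_iff using assms by blast
qed

lemma Rup_eq:
  fixes Rm :: "'i::finite \<Rightarrow> 'i \<Rightarrow> 'i \<Rightarrow> 'i \<Rightarrow> 'a::field"
  assumes H: "is_hecke Rm q" and f: "f \<in> tpow p" and g: "g \<in> tpow p" and k: "k < p"
    and e: "Rup Rm p k f = Rup Rm p k g"
  shows "f = g"
proof -
  have "Rup Rm p k (\<lambda>w. 1 * f w + (-1) * g w) = (\<lambda>w. 1 * Rup Rm p k f w + (-1) * Rup Rm p k g w)"
    by (rule Rup_lin2)
  then have z: "Rup Rm p k (\<lambda>w. 1 * f w + (-1) * g w) = 0" using e by (simp add: fun_eq_iff)
  have "(\<lambda>w. 1 * f w + (-1) * g w) \<in> tpow p" using f g by (simp add: tpow_def)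
  then have "(\<lambda>w. 1 * f w + (-1) * g w) = 0" using Rup_inj[OF H _ k z] by blast
  then show ?thesis by (simp add: fun_eq_iff)
qed

theorem proposition3p1:
  fixes Rm :: "'i::finite \<Rightarrow> 'i \<Rightarrow> 'i \<Rightarrow> 'i \<Rightarrow> 'a::field"
    and q :: 'a and n :: nat and t :: "'i list \<Rightarrow> 'a"
  assumes hecke: "is_hecke Rm q"
    and n_pos: "n > 0"
    and dim1: "tens.dim (Ups Rm q n) = 1"
    and top0: "Ups Rm q (Suc n) = {0}"
    and t_in: "t \<in> Ups Rm q n" and t_nz: "t \<noteq> 0"
  shows "\<exists>\<theta> \<theta>b. in_GL \<theta> \<and> in_GL \<theta>b
     \<and> (\<forall>v\<in>tpow 1. Rdown Rm (Suc n) n (tmul 1 v t) = tmul n t (\<theta> v))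
     \<and> (\<forall>v\<in>tpow 1. Rup Rm (Suc n) n (tmul n t v) = tmul 1 (\<theta>b v) t)
     \<and> (\<forall>v\<in>tpow 1. \<theta>b v = sc (q ^ (n + 1)) (inv_into (tpow 1) \<theta> v))"
proof -
  note H = hecke
  have tt: "t \<in> tpow n" using t_in by (simp add: Ups_def)
  obtain w0 where w0: "t w0 \<noteq> 0" using t_nz by (auto simp: fun_eq_iff)
  have lw0: "length w0 = n" using tt w0 by (auto simp: tpow_def)
  have tP: "\<exists>g\<in>tpow n. t = (\<lambda>w. Ri Rm n i g w - q * g w)" if "1 \<le> i" "i \<le> n - 1" for i
  proof -
    have "\<exists>g\<in>tpow n. t = Ri Rm n i g - sc q g" using t_in that by (simp add: Ups_def)
    then obtain g where "g \<in> tpow n" "t = Ri Rm n i g - sc q g" by blast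
    then show ?thesis by (auto simp: fun_eq_iff sc_def)
  qed
  have xt: "tmul 1 v t \<in> tpow (Suc n)" if "v \<in> tpow 1" for v
    using tmul_tpow[OF that tt] by simp
  have xA: "\<forall>j. 2 \<le> j \<and> j \<le> n \<longrightarrow> (\<exists>a\<in>tpow (Suc n). tmul 1 v t = (\<lambda>w. Ri Rm (Suc n) j a w - q * a w))"
    if v: "v \<in> tpow 1" for v
  proof (intro allI impI)
    fix j assume j: "2 \<le> j \<and> j \<le> n"
    then obtain i where i: "j = Suc i" "1 \<le> i" "i \<le> n - 1" by (cases j) auto
    obtain g where g0: "g \<in> tpow n" "t = (\<lambda>w. Ri Rm n i g w - q * g w)" using tP[OF i(2,3)] by blast
    then have g: "g \<in> tpow n" "t = (\<lambda>w. 1 * Ri Rm n i g w + (- q) * g w)" by simp_all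
    have "tmul 1 v t = (\<lambda>w. 1 * tmul 1 v (Ri Rm n i g) w + (- q) * tmul 1 v g w)"
      by (subst g(2), rule tmul_right_lin)
    also have "... = (\<lambda>w. Ri Rm (Suc n) j (tmul 1 v g) w - q * tmul 1 v g w)"
      using TL1[OF v i(2), of Rm n g] i by simp
    finally show "\<exists>a\<in>tpow (Suc n). tmul 1 v t = (\<lambda>w. Ri Rm (Suc n) j a w - q * a w)"
      using tmul_tpow[OF v g(1)] by auto
  qed
  have Dn: "\<exists>u\<in>tpow 1. Rdown Rm (Suc n) n (tmul 1 v t) = tmul n t u" if v: "v \<in> tpow 1" for v
  proof (rule decomp_right[OF dim1 t_in t_nz Rdown_tpow[OF xt[OF v]]], intro allI impI)
    fix i assume i: "1 \<le> i \<and> i \<le> n - 1"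
    then have si: "2 \<le> Suc i \<and> Suc i \<le> n" by arith
    then obtain a where a0: "a \<in> tpow (Suc n)" "tmul 1 v t = (\<lambda>w. Ri Rm (Suc n) (Suc i) a w - q * a w)"
      using xA[OF v] by blast
    then have a: "a \<in> tpow (Suc n)" "tmul 1 v t = (\<lambda>w. 1 * Ri Rm (Suc n) (Suc i) a w + (- q) * a w)"
      by simp_all
    have "Rdown Rm (Suc n) n (tmul 1 v t) = (\<lambda>w. 1 * Rdown Rm (Suc n) n (Ri Rm (Suc n) (Suc i) a) w + (- q) * Rdown Rm (Suc n) n a w)"
      by (subst a(2), rule Rdown_lin2)
    also have "... = (\<lambda>w. Ri Rm (Suc n) i (Rdown Rm (Suc n) n a) w - q * Rdown Rm (Suc n) n a w)"
      using Rdown_conj[OF H, of i n "Suc n" a] si i by simp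
    finally show "\<exists>G\<in>tpow (Suc n). Rdown Rm (Suc n) n (tmul 1 v t) = (\<lambda>w. Ri Rm (Suc n) i G w - q * G w)"
      using Rdown_tpow[OF a(1)] by auto
  qed
  define \<theta> where "\<theta> v = (\<lambda>w. if length w = 1 then Rdown Rm (Suc n) n (tmul 1 v t) (w0 @ w) / t w0 else 0)" for v
  have \<theta>t: "\<theta> v \<in> tpow 1" for v by (simp add: \<theta>_def tpow_def)
  have \<theta>_eq: "Rdown Rm (Suc n) n (tmul 1 v t) = tmul n t (\<theta> v)" if v: "v \<in> tpow 1" for v
  proof -
    obtain u where u: "u \<in> tpow 1" "Rdown Rm (Suc n) n (tmul 1 v t) = tmul n t u" using Dn[OF v] by blast
    have "\<theta> v = u"
    proof (rule ext)
      fix w :: "'i list"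
      show "\<theta> v w = u w"
        using u w0 lw0 by (simp add: \<theta>_def tmul_def tpow_def)
    qed
    then show ?thesis using u by simp
  qed
  have tvP: "\<exists>a\<in>tpow (Suc n). tmul n t v = (\<lambda>w. Ri Rm (Suc n) i a w - q * a w)"
    if v: "v \<in> tpow 1" and i: "1 \<le> i" "i \<le> n - 1" for v i
  proof -
    obtain g where g0: "g \<in> tpow n" "t = (\<lambda>w. Ri Rm n i g w - q * g w)" using tP[OF i] by blast
    then have g: "g \<in> tpow n" "t = (\<lambda>w. 1 * Ri Rm n i g w + (- q) * g w)" by simp_all
    have "tmul n t v = (\<lambda>w. 1 * tmul n (Ri Rm n i g) v w + (- q) * tmul n g v w)"
      by (subst g(2), rule tmul_left_lin)
    also have "... = (\<lambda>w. Ri Rm (Suc n) i (tmul n g v) w - q * tmul n g v w)"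
      using TR1[OF v i(1), of n Rm g] i by simp
    finally show ?thesis using tmul_tpow[OF g(1) v] by auto
  qed
  have tvt: "tmul n t v \<in> tpow (Suc n)" if v: "v \<in> tpow 1" for v
    using tmul_tpow[OF tt v] by simp
  have Un: "\<exists>u\<in>tpow 1. Rup Rm (Suc n) n (tmul n t v) = tmul 1 u t" if v: "v \<in> tpow 1" for v
  proof (rule decomp_left[OF dim1 t_in t_nz Rup_tpow[OF tvt[OF v]]], intro allI impI)
    fix j assume j: "2 \<le> j \<and> j \<le> n"
    then obtain i where i: "j = Suc i" "1 \<le> i" "i \<le> n - 1" by (cases j) auto
    obtain a where a0: "a \<in> tpow (Suc n)" "tmul n t v = (\<lambda>w. Ri Rm (Suc n) i a w - q * a w)"
      using tvP[OF v i(2,3)] by blast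
    then have a: "a \<in> tpow (Suc n)" "tmul n t v = (\<lambda>w. 1 * Ri Rm (Suc n) i a w + (- q) * a w)"
      by simp_all
    have "Rup Rm (Suc n) n (tmul n t v) = (\<lambda>w. 1 * Rup Rm (Suc n) n (Ri Rm (Suc n) i a) w + (- q) * Rup Rm (Suc n) n a w)"
      by (subst a(2), rule Rup_lin2)
    also have "... = (\<lambda>w. Ri Rm (Suc n) j (Rup Rm (Suc n) n a) w - q * Rup Rm (Suc n) n a w)"
      using Rup_conj[OF H, of i n "Suc n" a] i by simp
    finally show "\<exists>G\<in>tpow (Suc n). Rup Rm (Suc n) n (tmul n t v) = (\<lambda>w. Ri Rm (Suc n) j G w - q * G w)"
      using Rup_tpow[OF a(1)] by auto
  qed
  define \<theta>b where "\<theta>b v = (\<lambda>w. if length w = 1 then Rup Rm (Suc n) n (tmul n t v) (w @ w0) / t w0 else 0)" for v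
  have \<theta>bt: "\<theta>b v \<in> tpow 1" for v by (simp add: \<theta>b_def tpow_def)
  have \<theta>b_eq: "Rup Rm (Suc n) n (tmul n t v) = tmul 1 (\<theta>b v) t" if v: "v \<in> tpow 1" for v
  proof -
    obtain u where u: "u \<in> tpow 1" "Rup Rm (Suc n) n (tmul n t v) = tmul 1 u t" using Un[OF v] by blast
    have "\<theta>b v = u"
    proof (rule ext)
      fix w :: "'i list"
      show "\<theta>b v w = u w"
        using u w0 lw0 by (simp add: \<theta>b_def tmul_def tpow_def)
    qed
    then show ?thesis using u by simp
  qed
  have cl1: "a = b" if "a \<in> tpow 1" "b \<in> tpow 1" "tmul 1 a t = tmul 1 b t" for a b
  proof (rule ext)
    fix w :: "'i list"
    show "a w = b w"
    proof (cases "length w = 1")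
      case True
      have "tmul 1 a t (w @ w0) = tmul 1 b t (w @ w0)" using that by simp
      then show ?thesis using True w0 by (simp add: tmul_def)
    next
      case False then show ?thesis using that by (simp add: tpow_def)
    qed
  qed
  have cl2: "a = b" if "a \<in> tpow 1" "b \<in> tpow 1" "tmul n t a = tmul n t b" for a b
  proof (rule ext)
    fix w :: "'i list"
    show "a w = b w"
    proof (cases "length w = 1")
      case True
      have "tmul n t a (w0 @ w) = tmul n t b (w0 @ w)" using that by simp
      then show ?thesis using True w0 lw0 by (simp add: tmul_def)
    next
      case False then show ?thesis using that by (simp add: tpow_def)
    qed
  qed
  define Q where "Q = q ^ Suc n"
  have Qnz: "Q \<noteq> 0" using hecke_q[OF H] by (simp add: Q_def)
  have main: "Rup Rm (Suc n) n (Rdown Rm (Suc n) n (tmul 1 v t)) = (\<lambda>w. Q * tmul 1 v t w)" if v: "v \<in> tpow 1" for v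
  proof -
    interpret core Rm q n "tmul 1 v t" using H xt[OF v] by unfold_locales
    show ?thesis using core_main[OF xA[OF v] top0] by (simp add: Q_def)
  qed
  have comp1: "\<theta>b (\<theta> v) = (\<lambda>w. Q * v w)" if v: "v \<in> tpow 1" for v
  proof (rule cl1[OF \<theta>bt])
    show "(\<lambda>w. Q * v w) \<in> tpow 1" using v by (simp add: tpow_def)
    have "tmul 1 (\<theta>b (\<theta> v)) t = Rup Rm (Suc n) n (Rdown Rm (Suc n) n (tmul 1 v t))"
      using \<theta>_eq[OF v] \<theta>b_eq[OF \<theta>t] by simp
    also have "... = tmul 1 (\<lambda>w. Q * v w) t"
      using main[OF v] by (simp add: tmul_def fun_eq_iff)
    finally show "tmul 1 (\<theta>b (\<theta> v)) t = tmul 1 (\<lambda>w. Q * v w) t" .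
  qed
  have comp2: "\<theta> (\<theta>b v) = (\<lambda>w. Q * v w)" if v: "v \<in> tpow 1" for v
  proof (rule cl2[OF \<theta>t])
    show "(\<lambda>w. Q * v w) \<in> tpow 1" using v by (simp add: tpow_def)
    have "Rup Rm (Suc n) n (Rdown Rm (Suc n) n (tmul 1 (\<theta>b v) t)) = (\<lambda>w. Q * tmul 1 (\<theta>b v) t w)"
      by (rule main[OF \<theta>bt])
    also have "... = (\<lambda>w. Q * Rup Rm (Suc n) n (tmul n t v) w)" using \<theta>b_eq[OF v] by simp
    also have "... = Rup Rm (Suc n) n (\<lambda>w. Q * tmul n t v w)" by (simp add: Rup_scale)
    finally have "Rdown Rm (Suc n) n (tmul 1 (\<theta>b v) t) = (\<lambda>w. Q * tmul n t v w)"
      using Rup_eq[OF H Rdown_tpow[OF xt[OF \<theta>bt]], of "\<lambda>w. Q * tmul n t v w"] tmul_tpow[OF tt v]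
      by (auto simp: tpow_def)
    then show "tmul n t (\<theta> (\<theta>b v)) = tmul n t (\<lambda>w. Q * v w)"
      using \<theta>_eq[OF \<theta>bt] by (simp add: tmul_def fun_eq_iff)
  qed
  have \<theta>sc: "\<theta> (sc c x) = sc c (\<theta> x)" for c x
  proof -
    have "tmul 1 (sc c x) t = (\<lambda>w. c * tmul 1 x t w)" by (simp add: tmul_def sc_def fun_eq_iff)
    then have e: "Rdown Rm (Suc n) n (tmul 1 (sc c x) t) = (\<lambda>w. c * Rdown Rm (Suc n) n (tmul 1 x t) w)"
      by (simp add: Rdown_scale)
    show "\<theta> (sc c x) = sc c (\<theta> x)" unfolding \<theta>_def e by (simp add: sc_def fun_eq_iff)
  qed
  have \<theta>bsc: "\<theta>b (sc c x) = sc c (\<theta>b x)" for c x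
  proof -
    have "tmul n t (sc c x) = (\<lambda>w. c * tmul n t x w)" by (simp add: tmul_def sc_def fun_eq_iff)
    then have e: "Rup Rm (Suc n) n (tmul n t (sc c x)) = (\<lambda>w. c * Rup Rm (Suc n) n (tmul n t x) w)"
      by (simp add: Rup_scale)
    show "\<theta>b (sc c x) = sc c (\<theta>b x)" unfolding \<theta>b_def e by (simp add: sc_def fun_eq_iff)
  qed
  have lin\<theta>: "Vector_Spaces.linear sc sc \<theta>"
  proof (rule linear_by)
    fix x y :: "'i list \<Rightarrow> 'a"
    have "tmul 1 (x + y) t = tmul 1 (\<lambda>w. 1 * x w + 1 * y w) t" by (simp add: plus_fun_def)
    also have "... = (\<lambda>w. 1 * tmul 1 x t w + 1 * tmul 1 y t w)" by (rule tmul_left_lin)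
    finally have e: "Rdown Rm (Suc n) n (tmul 1 (x + y) t) = (\<lambda>w. 1 * Rdown Rm (Suc n) n (tmul 1 x t) w + 1 * Rdown Rm (Suc n) n (tmul 1 y t) w)"
      using Rdown_lin2[of Rm "Suc n" n 1 "tmul 1 x t" 1 "tmul 1 y t"] by simp
    show "\<theta> (x + y) = \<theta> x + \<theta> y" unfolding \<theta>_def e by (simp add: fun_eq_iff add_divide_distrib)
  next
    fix c and x :: "'i list \<Rightarrow> 'a"
    show "\<theta> (sc c x) = sc c (\<theta> x)" by (rule \<theta>sc)
  qed
  have lin\<theta>b: "Vector_Spaces.linear sc sc \<theta>b"
  proof (rule linear_by)
    fix x y :: "'i list \<Rightarrow> 'a"
    have "tmul n t (x + y) = tmul n t (\<lambda>w. 1 * x w + 1 * y w)" by (simp add: plus_fun_def)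
    also have "... = (\<lambda>w. 1 * tmul n t x w + 1 * tmul n t y w)" by (rule tmul_right_lin)
    finally have e: "Rup Rm (Suc n) n (tmul n t (x + y)) = (\<lambda>w. 1 * Rup Rm (Suc n) n (tmul n t x) w + 1 * Rup Rm (Suc n) n (tmul n t y) w)"
      using Rup_lin2[of Rm "Suc n" n 1 "tmul n t x" 1 "tmul n t y"] by simp
    show "\<theta>b (x + y) = \<theta>b x + \<theta>b y" unfolding \<theta>b_def e by (simp add: fun_eq_iff add_divide_distrib)
  next
    fix c and x :: "'i list \<Rightarrow> 'a"
    show "\<theta>b (sc c x) = sc c (\<theta>b x)" by (rule \<theta>bsc)
  qed
  have scin: "(\<lambda>w. c * v w) \<in> tpow 1" if "v \<in> tpow 1" for c v using that by (simp add: tpow_def)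
  have inj\<theta>: "inj_on \<theta> (tpow 1)"
  proof (rule inj_onI)
    fix a b assume ab: "a \<in> tpow 1" "b \<in> tpow 1" "\<theta> a = \<theta> b"
    then have "(\<lambda>w. Q * a w) = (\<lambda>w. Q * b w)" using comp1 by metis
    then show "a = b" using Qnz by (simp add: fun_eq_iff)
  qed
  have inj\<theta>b: "inj_on \<theta>b (tpow 1)"
  proof (rule inj_onI)
    fix a b assume ab: "a \<in> tpow 1" "b \<in> tpow 1" "\<theta>b a = \<theta>b b"
    then have "(\<lambda>w. Q * a w) = (\<lambda>w. Q * b w)" using comp2 by metis
    then show "a = b" using Qnz by (simp add: fun_eq_iff)
  qed
  have inv\<theta>: "\<theta> (\<lambda>w. (1 / Q) * \<theta>b u w) = u" if u: "u \<in> tpow 1" for u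
  proof -
    have "\<theta> (\<lambda>w. (1 / Q) * \<theta>b u w) = sc (1 / Q) (\<theta> (\<theta>b u))"
      using \<theta>sc[of "1 / Q" "\<theta>b u"] by (simp add: sc_def)
    then show ?thesis using comp2[OF u] Qnz by (simp add: sc_def fun_eq_iff)
  qed
  have inv\<theta>b: "\<theta>b (\<lambda>w. (1 / Q) * \<theta> u w) = u" if u: "u \<in> tpow 1" for u
  proof -
    have "\<theta>b (\<lambda>w. (1 / Q) * \<theta> u w) = sc (1 / Q) (\<theta>b (\<theta> u))"
      using \<theta>bsc[of "1 / Q" "\<theta> u"] by (simp add: sc_def)
    then show ?thesis using comp1[OF u] Qnz by (simp add: sc_def fun_eq_iff)
  qed
  have bij\<theta>: "bij_betw \<theta> (tpow 1) (tpow 1)"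
    unfolding bij_betw_def
  proof (intro conjI inj\<theta> equalityI subsetI)
    fix u assume "u \<in> \<theta> ` tpow 1" then show "u \<in> tpow 1" using \<theta>t by auto
  next
    fix u :: "'i list \<Rightarrow> 'a" assume u: "u \<in> tpow 1"
    show "u \<in> \<theta> ` tpow 1" using inv\<theta>[OF u] scin[OF \<theta>bt] by (metis image_eqI)
  qed
  have bij\<theta>b: "bij_betw \<theta>b (tpow 1) (tpow 1)"
    unfolding bij_betw_def
  proof (intro conjI inj\<theta>b equalityI subsetI)
    fix u assume "u \<in> \<theta>b ` tpow 1" then show "u \<in> tpow 1" using \<theta>bt by auto
  next
    fix u :: "'i list \<Rightarrow> 'a" assume u: "u \<in> tpow 1"
    show "u \<in> \<theta>b ` tpow 1" using inv\<theta>b[OF u] scin[OF \<theta>t] by (metis image_eqI)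
  qed
  have last: "\<theta>b v = sc (q ^ (n + 1)) (inv_into (tpow 1) \<theta> v)" if v: "v \<in> tpow 1" for v
  proof -
    have "inv_into (tpow 1) \<theta> v = (\<lambda>w. (1 / Q) * \<theta>b v w)"
      using inv_into_f_eq[OF inj\<theta>] scin[of "\<theta>b v" "1 / Q", OF \<theta>bt] inv\<theta>[OF v] by blast
    then show ?thesis using Qnz by (simp add: sc_def Q_def fun_eq_iff)
  qed
  show ?thesis
    apply (rule exI[of _ \<theta>], rule exI[of _ \<theta>b])
    using lin\<theta> lin\<theta>b bij\<theta> bij\<theta>b \<theta>_eq \<theta>b_eq last by (simp add: in_GL_def)
qed

end
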